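(* Let $\kappa, m, n$ be positive integers with $m$ and $n$ coprime, and suppose there is an integer $s$ with \[ \kappa^4 m^4 n^4 - 32\kappa(m^2+n^2) = s^2. \] Then $(\kappa, m, n) = (4, 1, 1)$. *)

theory Defs
  imports Main
begin

end

theory Submission
  imports Defs
begin

lemma chk: "\<forall>m\<in>set [1..5]. \<forall>k\<in>set [1..32 div m^2]. \<forall>e\<in>set [1..32 div (k*m^2)]. \<forall>n\<in>set [1..36].
  n^2*(e*k^2*m^2-8*k) = 8*k*m^2+e^2 \<longrightarrow> (k,m,n)\<in>{(4::int,1::int,1::int),(1,2,2)}"
  by code_simp

lemma le_div_aux: "(0::int) < b \<Longrightarrow> a*b \<le> c \<Longrightarrow> a \<le> c div b"
  by (metis nonzero_mult_div_cancel_right order_less_irrefl zdiv_mono1)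

lemma main:
  fixes \<kappa> m n s :: int
  assumes k0: "\<kappa> > 0" and m0: "m > 0" and n0: "n > 0"
    and cop: "coprime m n" and mn: "m \<le> n"
    and eq: "\<kappa>^4 * m^4 * n^4 - 32 * \<kappa> * (m^2 + n^2) = s^2"
  shows "(\<kappa>, m, n) = (4, 1, 1)"
proof -
  define A where "A = \<kappa>^2*m^2*n^2"
  define t where "t = \<bar>s\<bar>"
  have A0: "A > 0" using k0 m0 n0 by (simp add: A_def)
  have t0: "t \<ge> 0" by (simp add: t_def)
  have tt: "t^2 = A^2 - 32 * \<kappa> * (m^2 + n^2)"
    using eq by (simp add: t_def A_def power_mult_distrib flip: power_mult)
  have pos: "32 * \<kappa> * (m^2 + n^2) > 0" using k0 m0 n0 by (simp add: add_pos_pos)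
  have "t^2 < A^2" using tt pos by linarith
  hence tA: "t < A" using A0 t0 by (simp add: power_less_imp_less_base)
  define d where "d = A - t"
  have d1: "d \<ge> 1" "d \<le> A" using tA t0 by (auto simp: d_def)
  have dd: "d * (2*A - d) = 32 * \<kappa> * (m^2 + n^2)"
    using tt unfolding d_def by (simp add: algebra_simps power2_eq_square)
  have "even d"
  proof (rule ccontr)
    assume "odd d"
    hence "odd (2*A - d)" by simp
    hence "odd (d * (2*A - d))" using \<open>odd d\<close> by simp
    thus False using dd by simp
  qed
  then obtain e where de: "d = 2*e" by blast
  have e1: "e \<ge> 1" "2*e \<le> A" using d1 de by auto
  have ee: "e * (A - e) = 8 * \<kappa> * (m^2 + n^2)"
    using dd de by (simp add: algebra_simps)
  have "e * A \<le> 2 * (e * (A - e))"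
  proof -
    have "e * (2*e) \<le> e * A" using e1 by (intro mult_left_mono) auto
    thus ?thesis by (simp add: algebra_simps)
  qed
  hence "e * A \<le> 16 * \<kappa> * (m^2 + n^2)" using ee by simp
  also have "\<dots> \<le> 16 * \<kappa> * (2 * n^2)"
    using mn m0 k0 by (intro mult_left_mono) (auto simp: power_mono)
  finally have "(e*\<kappa>*m^2) * (\<kappa> * n^2) \<le> 32 * (\<kappa> * n^2)"
    by (simp add: A_def algebra_simps power2_eq_square)
  hence bnd: "e*\<kappa>*m^2 \<le> 32" using k0 n0 by (simp add: mult_le_cancel_right)
  have m2: "m^2 \<ge> 1" using m0 by (simp add: one_le_power)
  have km: "\<kappa>*m^2 \<ge> 1" "e*\<kappa> \<ge> 1" "m^2 \<ge> 1"
    using k0 e1 m2 by (smt (verit) mult_le_cancel_left1 mult_le_cancel_right1)+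
  have "m^2 \<le> e*\<kappa>*m^2" using mult_right_mono[OF km(2), of "m^2"] by simp
  hence "m^2 < 6^2" using bnd by simp
  hence "m < 6" using m0 power_less_imp_less_base[of m 2 6] by linarith
  hence m5: "m \<le> 5" by simp
  have km32: "\<kappa>*m^2 \<le> 32" using mult_right_mono[OF e1(1), of "\<kappa>*m^2"] km bnd
    by (simp add: mult.assoc)
  have kb: "\<kappa> \<le> 32 div m^2"
    using m2 km32 by (intro le_div_aux) auto
  have eb: "e \<le> 32 div (\<kappa>*m^2)"
    using km bnd by (intro le_div_aux) (auto simp: mult.assoc)
  have neq: "n^2*(e*\<kappa>^2*m^2-8*\<kappa>) = 8*\<kappa>*m^2+e^2"
    using ee by (simp add: A_def algebra_simps power2_eq_square)
  have "e*\<kappa>^2*m^2-8*\<kappa> \<ge> 1"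
  proof (rule ccontr)
    assume "\<not> ?thesis"
    hence "n^2*(e*\<kappa>^2*m^2-8*\<kappa>) \<le> 0" by (simp add: mult_nonneg_nonpos)
    moreover have "8*\<kappa>*m^2+e^2 > 0" using k0 m0 by (simp add: add_pos_nonneg)
    ultimately show False using neq by simp
  qed
  hence "n^2 \<le> 8*\<kappa>*m^2+e^2" using neq
    by (metis mult.right_neutral mult_left_mono zero_le_power2)
  also have "\<dots> \<le> 8*32 + 32^2"
  proof -
    have "\<kappa>*m^2 \<le> 32" by (rule km32)
    moreover have "e*1 \<le> e*(\<kappa>*m^2)" using km(1) e1 by (intro mult_left_mono) auto
    hence "e \<le> 32" using bnd by (simp add: mult.assoc)
    moreover hence "e^2 \<le> 32^2" using e1 by (intro power_mono) auto
    ultimately show ?thesis by simp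
  qed
  finally have "n^2 \<le> 36^2" by simp
  hence n36: "n \<le> 36" using n0 by (metis abs_le_square_iff abs_of_nonneg less_imp_le zero_le_numeral abs_numeral)
  have i1: "m \<in> set [1..5]" using m0 m5 by (simp only: set_upto) simp
  have i2: "\<kappa> \<in> set [1..32 div m^2]" using k0 kb by (simp only: set_upto) simp
  have i3: "e \<in> set [1..32 div (\<kappa>*m^2)]" using e1 eb by (simp only: set_upto) simp
  have i4: "n \<in> set [1..36]" using n0 n36 by (simp only: set_upto) simp
  have "(\<kappa>,m,n) \<in> {(4,1,1),(1,2,2)}"
    using bspec[OF bspec[OF bspec[OF bspec[OF chk i1] i2] i3] i4] neq by blast
  moreover have "\<not> (m = 2 \<and> n = 2)" using cop by auto
  ultimately show ?thesis by auto
qed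

theorem theorem5:
  fixes \<kappa> m n s :: int
  assumes "\<kappa> > 0" and "m > 0" and "n > 0"
    and "coprime m n"
    and "\<kappa>^4 * m^4 * n^4 - 32 * \<kappa> * (m^2 + n^2) = s^2"
  shows "(\<kappa>, m, n) = (4, 1, 1)"
proof (cases "m \<le> n")
  case True
  then show ?thesis using main assms by blast
next
  case False
  have "(\<kappa>, n, m) = (4, 1, 1)"
    using main[of \<kappa> n m s] assms False
    by (simp add: coprime_commute algebra_simps)
  thus ?thesis using False by simp
qed

end
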